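(* Let $G$ be a digraph with a fixed upward planar drawing and let $P$ and $Q$ be vertex disjoint directed paths in $G$. Then either $\mathrm{Right}(P)\cap Q=\emptyset$ or $\mathrm{Left}(P)\cap Q=\emptyset$.
   Context: An upward planar drawing of a digraph is a plane drawing (no edge crossings) in which every directed edge is a curve monotone increasing in the $y$-direction from tail to head. A path is identified with the set of points of $\mathbb{R}^2$ in its drawing. For a path $P$ with endpoints $(x,y)$ and $(x',y')$, $y\le y'$, define $\mathrm{Right}(P):=\{(u,v)\in\mathbb{R}^2: y\le v\le y' \text{ and } u'<u \text{ for all } u' \text{ with } (u',v)\in P\}$ and $\mathrm{Left}(P):=\{(u,v)\in\mathbb{R}^2: y\le v\le y' \text{ and } u'>u \text{ for all } u' \text{ with } (u',v)\in P\}$. *)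

theory Defs
  imports "HOL-Analysis.Analysis"
begin

text \<open>Points of the plane are pairs (x,y) :: real \<times> real; the y-coordinate is snd.
  A digraph is a vertex set V with an edge relation E \<subseteq> V \<times> V (edge (u,v) goes from tail u
  to head v).  A drawing assigns a point pos v to each vertex and a curve cur e
  (a path on [0,1]) to each edge.\<close>

definition upward_planar_drawing ::
  "'v set \<Rightarrow> ('v \<times> 'v) set \<Rightarrow> ('v \<Rightarrow> real \<times> real) \<Rightarrow> ('v \<times> 'v \<Rightarrow> real \<Rightarrow> real \<times> real) \<Rightarrow> bool"
where
  "upward_planar_drawing V E pos cur \<longleftrightarrow>
     E \<subseteq> V \<times> V \<and>
     inj_on pos V \<and>
     (\<forall>e\<in>E. arc (cur e) \<and> pathstart (cur e) = pos (fst e) \<and> pathfinish (cur e) = pos (snd e)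
        \<and> strict_mono_on {0..1} (\<lambda>t. snd (cur e t))) \<and>
     (\<forall>e\<in>E. \<forall>v\<in>V. pos v \<in> path_image (cur e) \<longrightarrow> v = fst e \<or> v = snd e) \<and>
     (\<forall>e\<in>E. \<forall>e'\<in>E. e \<noteq> e' \<longrightarrow>
        path_image (cur e) \<inter> path_image (cur e') \<subseteq> pos ` ({fst e, snd e} \<inter> {fst e', snd e'}))"

definition directed_path :: "'v set \<Rightarrow> ('v \<times> 'v) set \<Rightarrow> 'v list \<Rightarrow> bool" where
  "directed_path V E ps \<longleftrightarrow> ps \<noteq> [] \<and> distinct ps \<and> set ps \<subseteq> V \<and>
     (\<forall>i. Suc i < length ps \<longrightarrow> (ps ! i, ps ! Suc i) \<in> E)"

definition path_points ::
  "('v \<Rightarrow> real \<times> real) \<Rightarrow> ('v \<times> 'v \<Rightarrow> real \<Rightarrow> real \<times> real) \<Rightarrow> 'v list \<Rightarrow> (real \<times> real) set" where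
  "path_points pos cur ps = pos ` set ps \<union>
     (\<Union>i\<in>{i. Suc i < length ps}. path_image (cur (ps ! i, ps ! Suc i)))"

definition Right_of :: "(real \<times> real) set \<Rightarrow> real \<times> real \<Rightarrow> real \<times> real \<Rightarrow> (real \<times> real) set" where
  "Right_of P a b = {(u,v). snd a \<le> v \<and> v \<le> snd b \<and> (\<forall>u'. (u',v) \<in> P \<longrightarrow> u' < u)}"

definition Left_of :: "(real \<times> real) set \<Rightarrow> real \<times> real \<Rightarrow> real \<times> real \<Rightarrow> (real \<times> real) set" where
  "Left_of P a b = {(u,v). snd a \<le> v \<and> v \<le> snd b \<and> (\<forall>u'. (u',v) \<in> P \<longrightarrow> u' > u)}"

definition RightP where
  "RightP pos cur ps = Right_of (path_points pos cur ps) (pos (hd ps)) (pos (last ps))"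

definition LeftP where
  "LeftP pos cur ps = Left_of (path_points pos cur ps) (pos (hd ps)) (pos (last ps))"

end

theory Submission
  imports Defs
begin

fun gp :: "('v \<Rightarrow> real \<times> real) \<Rightarrow> ('v \<times> 'v \<Rightarrow> real \<Rightarrow> real \<times> real) \<Rightarrow> 'v list \<Rightarrow> real \<Rightarrow> real \<times> real" where
  "gp pos cur [] = (\<lambda>t. (0,0))"
| "gp pos cur [v] = (\<lambda>t. pos v)"
| "gp pos cur [v,w] = cur (v,w)"
| "gp pos cur (v#w#u#rest) = cur (v,w) +++ gp pos cur (w#u#rest)"

lemma path_points_single: "path_points pos cur [v] = {pos v}"
  by (simp add: path_points_def)

lemma path_points_Cons2:
  "path_points pos cur (v#w#rest) = insert (pos v) (path_image (cur (v,w)) \<union> path_points pos cur (w#rest))"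
proof -
  have "{i. Suc i < length (v#w#rest)} = insert 0 (Suc ` {i. Suc i < length (w#rest)})"
    by (auto simp: image_iff) (metis Suc_less_eq less_Suc_eq_0_disj)
  then show ?thesis
    by (auto simp: path_points_def)
qed

lemma smono_join:
  fixes g1 g2 :: "real \<Rightarrow> real \<times> real"
  assumes "strict_mono_on {0..1} (\<lambda>t. snd (g1 t))" "strict_mono_on {0..1} (\<lambda>t. snd (g2 t))"
    "pathfinish g1 = pathstart g2"
  shows "strict_mono_on {0..1} (\<lambda>t. snd ((g1 +++ g2) t))"
proof (rule strict_mono_onI)
  fix r s :: real assume rs: "r \<in> {0..1}" "s \<in> {0..1}" "r < s"
  have f: "g1 1 = g2 0" using assms(3) by (simp add: pathfinish_def pathstart_def)
  show "snd ((g1 +++ g2) r) < snd ((g1 +++ g2) s)"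
  proof (cases "s \<le> 1/2")
    case True
    then show ?thesis using rs assms(1) by (auto simp: joinpaths_def strict_mono_on_def)
  next
    case False
    note F = False
    show ?thesis
    proof (cases "r \<le> 1/2")
      case True
      have "snd (g1 (2 * r)) \<le> snd (g1 1)"
      proof (cases "2 * r < 1")
        case True
        have "snd (g1 (2 * r)) < snd (g1 1)"
          using strict_mono_onD[OF assms(1), of "2 * r" 1] rs True by auto
        then show ?thesis by simp
      next
        case False
        then have "2 * r = 1" using \<open>r \<le> 1/2\<close> by simp
        then show ?thesis by simp
      qed
      also have "\<dots> = snd (g2 0)" using f by simp
      also have "\<dots> < snd (g2 (2 * s - 1))"
        using rs F assms(2) by (auto simp: strict_mono_on_def)
      finally show ?thesis using True F by (simp add: joinpaths_def)
    next
      case False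
      then show ?thesis using rs F assms(2) by (auto simp: joinpaths_def strict_mono_on_def)
    qed
  qed
qed

lemma edge_props:
  assumes D: "upward_planar_drawing V E pos cur" and e: "(v,w) \<in> E"
  shows "arc (cur (v,w)) \<and> pathstart (cur (v,w)) = pos v \<and> pathfinish (cur (v,w)) = pos w
        \<and> strict_mono_on {0..1} (\<lambda>t. snd (cur (v,w) t))"
proof -
  have "\<forall>e\<in>E. arc (cur e) \<and> pathstart (cur e) = pos (fst e) \<and> pathfinish (cur e) = pos (snd e)
        \<and> strict_mono_on {0..1} (\<lambda>t. snd (cur e t))"
    using D[unfolded upward_planar_drawing_def, THEN conjunct2, THEN conjunct2, THEN conjunct1] .
  from bspec[OF this e] show ?thesis by simp
qed

lemma gp_props:
  shows "upward_planar_drawing V E pos cur \<Longrightarrow> ps \<noteq> [] \<Longrightarrow> (\<forall>i. Suc i < length ps \<longrightarrow> (ps!i, ps!Suc i) \<in> E) \<Longrightarrow>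
    path (gp pos cur ps) \<and> pathstart (gp pos cur ps) = pos (hd ps) \<and>
    pathfinish (gp pos cur ps) = pos (last ps) \<and>
    path_image (gp pos cur ps) = path_points pos cur ps \<and>
    (length ps \<ge> 2 \<longrightarrow> strict_mono_on {0..1} (\<lambda>t. snd (gp pos cur ps t)))"
proof (induction pos cur ps rule: gp.induct)
  case (1 pos cur)
  then show ?case by simp
next
  case (2 pos cur v)
  then show ?case by (simp add: path_points_single pathstart_def pathfinish_def path_image_def path_def)
next
  case (3 pos cur v w)
  note D = 3(1)
  have e: "(v,w) \<in> E" using 3(3)[rule_format, of 0] by simp
  have c: "arc (cur (v,w)) \<and> pathstart (cur (v,w)) = pos v \<and> pathfinish (cur (v,w)) = pos w
        \<and> strict_mono_on {0..1} (\<lambda>t. snd (cur (v,w) t))" by (simp add: edge_props[OF D e])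
  have pv: "pos v \<in> path_image (cur (v,w))" "pos w \<in> path_image (cur (v,w))"
    using c by (metis pathstart_in_path_image pathfinish_in_path_image)+
  have "path_points pos cur [v,w] = insert (pos v) (path_image (cur (v,w)) \<union> {pos w})"
    by (simp only: path_points_Cons2 path_points_single)
  also have "\<dots> = path_image (cur (v,w))" using pv by blast
  finally have im: "path_image (gp pos cur [v,w]) = path_points pos cur [v,w]" by simp
  have pa: "path (cur (v,w))" using c arc_imp_path by blast
  show ?case using c im pa by simp
next
  case (4 pos cur v w u rest)
  note D = 4(2)
  have e: "(v,w) \<in> E" using 4(4)[rule_format, of 0] by simp
  have ih: "path (gp pos cur (w#u#rest)) \<and> pathstart (gp pos cur (w#u#rest)) = pos w \<and>
    pathfinish (gp pos cur (w#u#rest)) = pos (last (w#u#rest)) \<and>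
    path_image (gp pos cur (w#u#rest)) = path_points pos cur (w#u#rest) \<and>
    strict_mono_on {0..1} (\<lambda>t. snd (gp pos cur (w#u#rest) t))"
    using 4(1)[OF D] 4(4)[rule_format, of "Suc _"] by simp
  have c: "arc (cur (v,w)) \<and> pathstart (cur (v,w)) = pos v \<and> pathfinish (cur (v,w)) = pos w
        \<and> strict_mono_on {0..1} (\<lambda>t. snd (cur (v,w) t))" by (simp add: edge_props[OF D e])
  have pvi: "pos v \<in> path_image (cur (v,w))"
    using c by (metis pathstart_in_path_image)
  have fs: "pathfinish (cur (v,w)) = pathstart (gp pos cur (w#u#rest))" using c ih by simp
  have g: "gp pos cur (v#w#u#rest) = cur (v,w) +++ gp pos cur (w#u#rest)" by simp
  have 1: "path (gp pos cur (v#w#u#rest))" unfolding g using path_join[OF fs] c ih arc_imp_path by blast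
  have 2: "pathstart (gp pos cur (v#w#u#rest)) = pos (hd (v#w#u#rest))" unfolding g using c by simp
  have 3: "pathfinish (gp pos cur (v#w#u#rest)) = pos (last (v#w#u#rest))" unfolding g using ih by simp
  have 4: "path_image (gp pos cur (v#w#u#rest)) = path_points pos cur (v#w#u#rest)"
  proof -
    have ihi: "path_image (gp pos cur (w#u#rest)) = path_points pos cur (w#u#rest)" using ih by blast
    have "path_image (gp pos cur (v#w#u#rest)) = path_image (cur (v,w)) \<union> path_image (gp pos cur (w#u#rest))"
      by (simp only: g path_image_join[OF fs])
    also have "\<dots> = insert (pos v) (path_image (cur (v,w)) \<union> path_points pos cur (w#u#rest))"
      using ihi pvi by (simp add: insert_absorb)
    also have "\<dots> = path_points pos cur (v#w#u#rest)" by (simp only: path_points_Cons2)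
    finally show ?thesis .
  qed
  have 5: "strict_mono_on {0..1} (\<lambda>t. snd (gp pos cur (v#w#u#rest) t))"
  proof -
    have sm1: "strict_mono_on {0..1} (\<lambda>t. snd (cur (v,w) t))" using c by blast
    have sm2: "strict_mono_on {0..1} (\<lambda>t. snd (gp pos cur (w#u#rest) t))" using ih by blast
    show ?thesis unfolding g by (rule smono_join[OF sm1 sm2 fs])
  qed
  show ?case using 1 2 3 4 5 by blast
qed

lemma gp_mono:
  assumes D: "upward_planar_drawing V E pos cur" and dp: "directed_path V E qs"
    and r: "0 \<le> r" "r \<le> t" "t \<le> 1"
  shows "snd (gp pos cur qs r) \<le> snd (gp pos cur qs t)"
proof (cases "length qs \<ge> 2")
  case True
  have sm: "strict_mono_on {0..1} (\<lambda>t. snd (gp pos cur qs t))"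
    using gp_props[OF D] dp True by (auto simp: directed_path_def)
  show ?thesis
  proof (cases "r < t")
    case True
    then show ?thesis using strict_mono_onD[OF sm, of r t] r by auto
  next
    case False
    then show ?thesis using r by simp
  qed
next
  case False
  have "qs \<noteq> []" using dp by (simp add: directed_path_def)
  then have "length qs = 1" using False by (cases qs) (auto simp: Suc_le_eq)
  then obtain v where "qs = [v]" by (auto simp: length_Suc_conv)
  then show ?thesis by simp
qed

lemma paths_disjoint:
  assumes D: "upward_planar_drawing V E pos cur"
    and P: "directed_path V E ps" and Q: "directed_path V E qs"
    and dj: "set ps \<inter> set qs = {}"
  shows "path_points pos cur ps \<inter> path_points pos cur qs = {}"
proof (rule ccontr)
  assume "path_points pos cur ps \<inter> path_points pos cur qs \<noteq> {}"
  then obtain z where zP: "z \<in> path_points pos cur ps" and zQ: "z \<in> path_points pos cur qs" by blast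
  note DD = D[unfolded upward_planar_drawing_def]
  have inj: "inj_on pos V" using DD[THEN conjunct2, THEN conjunct1] .
  have vtx: "\<forall>e\<in>E. \<forall>v\<in>V. pos v \<in> path_image (cur e) \<longrightarrow> v = fst e \<or> v = snd e"
    using DD[THEN conjunct2, THEN conjunct2, THEN conjunct2, THEN conjunct1] .
  have cr: "\<forall>e\<in>E. \<forall>e'\<in>E. e \<noteq> e' \<longrightarrow>
        path_image (cur e) \<inter> path_image (cur e') \<subseteq> pos ` ({fst e, snd e} \<inter> {fst e', snd e'})"
    using DD[THEN conjunct2, THEN conjunct2, THEN conjunct2, THEN conjunct2] .
  have sP: "set ps \<subseteq> V" and eP: "\<And>i. Suc i < length ps \<Longrightarrow> (ps ! i, ps ! Suc i) \<in> E"
    using P by (auto simp: directed_path_def)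
  have sQ: "set qs \<subseteq> V" and eQ: "\<And>i. Suc i < length qs \<Longrightarrow> (qs ! i, qs ! Suc i) \<in> E"
    using Q by (auto simp: directed_path_def)
  have vertex_edge: False if "p \<in> set ps" "Suc j < length qs" "pos p \<in> path_image (cur (qs ! j, qs ! Suc j))" for p j
  proof -
    have "p \<in> V" using sP that(1) by blast
    from bspec[OF bspec[OF vtx eQ[OF that(2)]] this] that(3)
    have "p = qs ! j \<or> p = qs ! Suc j" by simp
    moreover have "qs ! j \<in> set qs" "qs ! Suc j \<in> set qs" using that(2) by auto
    ultimately show False using dj that(1) by blast
  qed
  have vertex_edge2: False if "q \<in> set qs" "Suc j < length ps" "pos q \<in> path_image (cur (ps ! j, ps ! Suc j))" for q j
  proof -
    have "q \<in> V" using sQ that(1) by blast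
    from bspec[OF bspec[OF vtx eP[OF that(2)]] this] that(3)
    have "q = ps ! j \<or> q = ps ! Suc j" by simp
    moreover have "ps ! j \<in> set ps" "ps ! Suc j \<in> set ps" using that(2) by auto
    ultimately show False using dj that(1) by blast
  qed
  show False
  proof (cases "z \<in> pos ` set ps")
    case True
    then obtain p where p: "p \<in> set ps" "z = pos p" by blast
    show False
    proof (cases "z \<in> pos ` set qs")
      case True
      then obtain q where q: "q \<in> set qs" "z = pos q" by blast
      have "p = q" using inj p q sP sQ by (auto simp: inj_on_def)
      then show False using p q dj by blast
    next
      case False
      then obtain j where "Suc j < length qs" "z \<in> path_image (cur (qs ! j, qs ! Suc j))"
        using zQ by (auto simp: path_points_def)
      then show False using vertex_edge p by blast
    qed
  next
    case False
    then obtain i where i: "Suc i < length ps" "z \<in> path_image (cur (ps ! i, ps ! Suc i))"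
      using zP by (auto simp: path_points_def)
    show False
    proof (cases "z \<in> pos ` set qs")
      case True
      then obtain q where q: "q \<in> set qs" "z = pos q" by blast
      then show False using vertex_edge2 i by blast
    next
      case False
      then obtain j where j: "Suc j < length qs" "z \<in> path_image (cur (qs ! j, qs ! Suc j))"
        using zQ by (auto simp: path_points_def)
      have m: "ps ! i \<in> set ps" "ps ! Suc i \<in> set ps" "qs ! j \<in> set qs" "qs ! Suc j \<in> set qs"
        using i(1) j(1) by auto
      have ne: "(ps ! i, ps ! Suc i) \<noteq> (qs ! j, qs ! Suc j)" using m dj by auto
      have "{ps ! i, ps ! Suc i} \<inter> {qs ! j, qs ! Suc j} = {}" using m dj by auto
      moreover have "path_image (cur (ps ! i, ps ! Suc i)) \<inter> path_image (cur (qs ! j, qs ! Suc j))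
          \<subseteq> pos ` ({ps ! i, ps ! Suc i} \<inter> {qs ! j, qs ! Suc j})"
        using bspec[OF bspec[OF cr eP[OF i(1)]] eQ[OF j(1)]] ne by simp
      ultimately show False using i(2) j(2) by blast
    qed
  qed
qed

theorem lemma5:
  fixes V :: "'v set" and E :: "('v \<times> 'v) set"
    and pos :: "'v \<Rightarrow> real \<times> real" and cur :: "'v \<times> 'v \<Rightarrow> real \<Rightarrow> real \<times> real"
    and ps qs :: "'v list"
  assumes "upward_planar_drawing V E pos cur"
    and "directed_path V E ps" and "directed_path V E qs"
    and "set ps \<inter> set qs = {}"
  shows "RightP pos cur ps \<inter> path_points pos cur qs = {}
       \<or> LeftP pos cur ps \<inter> path_points pos cur qs = {}"
proof (rule ccontr)
  note D = assms(1)
  define P where "P = path_points pos cur ps"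
  define Q where "Q = path_points pos cur qs"
  define gP where "gP = gp pos cur ps"
  define gQ where "gQ = gp pos cur qs"
  define y0 where "y0 = snd (pos (hd ps))"
  define y1 where "y1 = snd (pos (last ps))"
  have psne: "ps \<noteq> []" and qsne: "qs \<noteq> []" using assms(2,3) by (auto simp: directed_path_def)
  have gPp: "path gP \<and> pathstart gP = pos (hd ps) \<and> pathfinish gP = pos (last ps) \<and>
    path_image gP = P \<and> (length ps \<ge> 2 \<longrightarrow> strict_mono_on {0..1} (\<lambda>t. snd (gP t)))"
    using gp_props[OF D psne] assms(2) unfolding gP_def P_def directed_path_def by blast
  have gQp: "path gQ \<and> path_image gQ = Q"
    using gp_props[OF D qsne] assms(3) unfolding gQ_def Q_def directed_path_def by blast
  have PQ: "P \<inter> Q = {}" using paths_disjoint[OF assms] unfolding P_def Q_def .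
  have exist: "\<exists>p\<in>P. snd p = v" if vr: "y0 \<le> v" "v \<le> y1" for v
  proof -
    have c: "continuous_on {0..1} (\<lambda>t. snd (gP t))"
      using gPp by (intro continuous_on_snd) (simp add: path_def)
    have "snd (gP 0) = y0" "snd (gP 1) = y1" using gPp
      by (auto simp: y0_def y1_def pathstart_def pathfinish_def)
    then obtain x where "0 \<le> x" "x \<le> 1" "snd (gP x) = v"
      using IVT'[of "\<lambda>t. snd (gP t)" 0 v 1, OF _ _ _ c] vr by auto
    moreover have "gP x \<in> P" using gPp \<open>0 \<le> x\<close> \<open>x \<le> 1\<close> by (auto simp: path_image_def)
    ultimately show ?thesis by blast
  qed
  have uniq: "p1 = p2" if pp: "p1 \<in> P" "p2 \<in> P" "snd p1 = snd p2" for p1 p2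
  proof (cases "length ps \<ge> 2")
    case True
    then have sm: "strict_mono_on {0..1} (\<lambda>t. snd (gP t))" using gPp by blast
    obtain s where s: "s \<in> {0..1}" "p1 = gP s" using pp(1) gPp by (auto simp: path_image_def)
    obtain t where t: "t \<in> {0..1}" "p2 = gP t" using pp(2) gPp by (auto simp: path_image_def)
    have "s = t"
    proof (rule ccontr)
      assume "s \<noteq> t"
      then consider "s < t" | "t < s" by linarith
      then show False
      proof cases
        case 1 then show False using strict_mono_onD[OF sm s(1) t(1)] s t pp(3) by simp
      next
        case 2 then show False using strict_mono_onD[OF sm t(1) s(1)] s t pp(3) by simp
      qed
    qed
    then show ?thesis using s t by simp
  next
    case False
    then have "length ps = 1" using psne by (cases ps) (auto simp: Suc_le_eq)
    then obtain v where "ps = [v]" by (auto simp: length_Suc_conv)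
    then show ?thesis using pp by (simp add: P_def path_points_single)
  qed
  define R0 where "R0 = {z. \<forall>p\<in>P. snd p = snd z \<longrightarrow> fst p < fst z}"
  define L0 where "L0 = {z. \<forall>p\<in>P. snd p = snd z \<longrightarrow> fst p > fst z}"
  have cP: "compact P" using gPp compact_path_image by blast
  have eqR0: "- R0 = (\<Union>x\<in>{..0::real} \<times> {0::real}. \<Union>y\<in>P. {x + y})"
  proof (intro set_eqI iffI)
    fix z assume "z \<in> - R0"
    then obtain p where p: "p \<in> P" "snd p = snd z" "\<not> fst p < fst z" by (auto simp: R0_def)
    have "z - p \<in> {..0::real} \<times> {0::real}" using p by (auto simp: mem_Times_iff)
    moreover have "z \<in> (\<Union>y\<in>P. {(z - p) + y})" using p(1) by (intro UN_I[of p]) auto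
    ultimately show "z \<in> (\<Union>x\<in>{..0::real} \<times> {0::real}. \<Union>y\<in>P. {x + y})" by (rule UN_I)
  next
    fix z assume "z \<in> (\<Union>x\<in>{..0::real} \<times> {0::real}. \<Union>y\<in>P. {x + y})"
    then obtain w p where "w \<in> {..0::real} \<times> {0::real}" "p \<in> P" "z = w + p" by blast
    then show "z \<in> - R0" by (auto simp: R0_def mem_Times_iff)
  qed
  have "closed (- R0)" unfolding eqR0
    by (rule closed_compact_sums[OF closed_Times[OF closed_atMost closed_singleton] cP])
  then have oR: "open R0" by (simp add: closed_def)
  have eqL0: "- L0 = (\<Union>x\<in>{0::real..} \<times> {0::real}. \<Union>y\<in>P. {x + y})"
  proof (intro set_eqI iffI)
    fix z assume "z \<in> - L0"
    then obtain p where p: "p \<in> P" "snd p = snd z" "\<not> fst p > fst z" by (auto simp: L0_def)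
    have "z - p \<in> {0::real..} \<times> {0::real}" using p by (auto simp: mem_Times_iff)
    moreover have "z \<in> (\<Union>y\<in>P. {(z - p) + y})" using p(1) by (intro UN_I[of p]) auto
    ultimately show "z \<in> (\<Union>x\<in>{0::real..} \<times> {0::real}. \<Union>y\<in>P. {x + y})" by (rule UN_I)
  next
    fix z assume "z \<in> (\<Union>x\<in>{0::real..} \<times> {0::real}. \<Union>y\<in>P. {x + y})"
    then obtain w p where "w \<in> {0::real..} \<times> {0::real}" "p \<in> P" "z = w + p" by blast
    then show "z \<in> - L0" by (auto simp: L0_def mem_Times_iff)
  qed
  have "closed (- L0)" unfolding eqL0
    by (rule closed_compact_sums[OF closed_Times[OF closed_atLeast closed_singleton] cP])
  then have oL: "open L0" by (simp add: closed_def)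
  assume "\<not> ?thesis"
  then obtain a b where a: "a \<in> RightP pos cur ps" "a \<in> Q" and b: "b \<in> LeftP pos cur ps" "b \<in> Q"
    unfolding Q_def by blast
  have ha: "y0 \<le> snd a" "snd a \<le> y1" "\<forall>u'. (u', snd a) \<in> P \<longrightarrow> u' < fst a"
    using a(1) unfolding RightP_def Right_of_def P_def y0_def y1_def by (auto simp: case_prod_beta)
  have hb: "y0 \<le> snd b" "snd b \<le> y1" "\<forall>u'. (u', snd b) \<in> P \<longrightarrow> u' > fst b"
    using b(1) unfolding LeftP_def Left_of_def P_def y0_def y1_def by (auto simp: case_prod_beta)
  obtain s where s: "s \<in> {0..1}" "a = gQ s" using a(2) gQp by (auto simp: path_image_def)
  obtain t where t: "t \<in> {0..1}" "b = gQ t" using b(2) gQp by (auto simp: path_image_def)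
  define I where "I = {min s t..max s t}"
  define S where "S = gQ ` I"
  have I01: "I \<subseteq> {0..1}" using s t by (auto simp: I_def)
  have cI: "continuous_on I gQ" using continuous_on_subset[OF _ I01] gQp unfolding path_def by blast
  have conS: "connected S" unfolding S_def
    using connected_continuous_image[OF cI] unfolding I_def by (simp add: connected_Icc)
  have hz: "y0 \<le> snd z \<and> snd z \<le> y1 \<and> z \<in> Q" if zS: "z \<in> S" for z
  proof -
    obtain r where r: "r \<in> I" "z = gQ r" using zS by (auto simp: S_def)
    have mn: "snd (gQ (min s t)) \<le> snd (gQ r)" "snd (gQ r) \<le> snd (gQ (max s t))"
      using r(1) s(1) t(1)
      by (auto simp: I_def gQ_def intro!: gp_mono[OF D assms(3)])
    have "min (snd a) (snd b) \<le> snd z" "snd z \<le> max (snd a) (snd b)"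
      using mn r s t by (auto simp: min_def max_def split: if_splits)
    moreover have "z \<in> Q" using r I01 gQp by (auto simp: path_image_def)
    ultimately show ?thesis using ha hb by linarith
  qed
  have cover: "S \<subseteq> R0 \<union> L0"
  proof
    fix z assume "z \<in> S"
    with hz obtain p where p: "p \<in> P" "snd p = snd z" and zQ: "z \<in> Q" using exist by blast
    have "p \<noteq> z" using p(1) zQ PQ by blast
    then have "fst p \<noteq> fst z" using p(2) by (auto simp: prod_eq_iff)
    then consider "fst p < fst z" | "fst p > fst z" by linarith
    then show "z \<in> R0 \<union> L0"
    proof cases
      case 1
      have "fst p' < fst z" if "p' \<in> P" "snd p' = snd z" for p'
        using uniq[of p' p] that p 1 by simp
      then show ?thesis by (simp add: R0_def)
    next
      case 2
      have "fst p' > fst z" if "p' \<in> P" "snd p' = snd z" for p'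
        using uniq[of p' p] that p 2 by simp
      then show ?thesis by (simp add: L0_def)
    qed
  qed
  have dis: "R0 \<inter> L0 \<inter> S = {}"
  proof (rule ccontr)
    assume "R0 \<inter> L0 \<inter> S \<noteq> {}"
    then obtain z where z: "z \<in> R0" "z \<in> L0" "z \<in> S" by blast
    with hz obtain p where "p \<in> P" "snd p = snd z" using exist by blast
    moreover have "\<forall>p\<in>P. snd p = snd z \<longrightarrow> fst p < fst z" "\<forall>p\<in>P. snd p = snd z \<longrightarrow> fst z < fst p"
      using z(1,2) by (simp_all add: R0_def L0_def)
    ultimately show False by force
  qed
  have "a \<in> S" "b \<in> S" using s t by (auto simp: S_def I_def)
  have "a \<in> R0"
  proof -
    have "fst p < fst a" if pa: "p \<in> P" "snd p = snd a" for p
      using ha(3) pa by (metis prod.collapse)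
    then show ?thesis by (auto simp: R0_def)
  qed
  have "b \<in> L0"
  proof -
    have "fst p > fst b" if pb: "p \<in> P" "snd p = snd b" for p
      using hb(3) pb by (metis prod.collapse)
    then show ?thesis by (auto simp: L0_def)
  qed
  show False using conS oR oL cover dis \<open>a \<in> S\<close> \<open>b \<in> S\<close> \<open>a \<in> R0\<close> \<open>b \<in> L0\<close>
    unfolding connected_def by blast
qed

end
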